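(* Let $N=\{1,\ldots,n\}$, $\mathcal{X}=\{-1,1\}^n$, and let $P\subseteq\Delta(\mathcal{X})$ be a closed convex set with set of extreme points $\mathrm{ext}(P)$. Then: (1) A deterministic voting rule $\phi$ is $P$-robust if and only if there exists a nonzero $w\in\mathbb{R}_+^n$ such that $\dfrac{\sum_i w_ir_i(\phi,p)}{\sum_iw_i}>\dfrac12$ for all $p\in\mathrm{ext}(P)$. (2) A deterministic voting rule $\phi$ is weakly $P$-robust if and only if there exists a nonzero $w\in\mathbb{R}_+^n$ such that $\dfrac{\sum_i w_ir_i(\phi,p)}{\sum_iw_i}\geq\dfrac12$ for all $p\in\mathrm{ext}(P)$.
   Context: A deterministic voting rule is a map $\phi:\mathcal{X}\to\{-1,1\}$; $\Delta(\mathcal{X})$ is the simplex of probability distributions on $\mathcal{X}$. Responsiveness: $r_i(\phi,p)=p(\{x:\phi(x)=x_i\})$. $\phi$ is $P$-robust if for every $p\in P$ some $i\in N$ has $r_i(\phi,p)>1/2$; weakly $P$-robust if for every $p\in P$ some $i\in N$ has $r_i(\phi,p)\geq1/2$. *)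

theory Defs
  imports "HOL-Analysis.Analysis"
begin

datatype vote = Minus | Plus

instance vote :: finite
proof
  have "UNIV = {Minus, Plus}" by (auto intro: vote.exhaust)
  then show "finite (UNIV :: vote set)" by (metis finite.emptyI finite.insertI)
qed

text \<open>Voters are the elements of a finite type 'n (so n = CARD('n));
  profiles X = {-1,1}^n are functions 'n => vote; a distribution on X is a
  vector in real^('n => vote).\<close>

definition prob_simplex :: "(real ^ ('n::finite \<Rightarrow> vote)) set" where
  "prob_simplex = {p. (\<forall>x. p $ x \<ge> 0) \<and> (\<Sum>x\<in>UNIV. p $ x) = 1}"

definition resp :: "(('n::finite \<Rightarrow> vote) \<Rightarrow> vote) \<Rightarrow> real ^ ('n \<Rightarrow> vote) \<Rightarrow> 'n \<Rightarrow> real" where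
  "resp \<phi> p i = (\<Sum>x\<in>{x. \<phi> x = x i}. p $ x)"

definition robust :: "(('n::finite \<Rightarrow> vote) \<Rightarrow> vote) \<Rightarrow> (real ^ ('n \<Rightarrow> vote)) set \<Rightarrow> bool" where
  "robust \<phi> P \<longleftrightarrow> (\<forall>p\<in>P. \<exists>i. resp \<phi> p i > 1/2)"

definition weakly_robust :: "(('n::finite \<Rightarrow> vote) \<Rightarrow> vote) \<Rightarrow> (real ^ ('n \<Rightarrow> vote)) set \<Rightarrow> bool" where
  "weakly_robust \<phi> P \<longleftrightarrow> (\<forall>p\<in>P. \<exists>i. resp \<phi> p i \<ge> 1/2)"

end

theory Submission
  imports Defs
begin

definition rv :: "(('n::finite \<Rightarrow> vote) \<Rightarrow> vote) \<Rightarrow> real ^ ('n \<Rightarrow> vote) \<Rightarrow> real ^ 'n" where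
  "rv \<phi> p = (\<chi> i. resp \<phi> p i)"

lemma resp_add: "resp \<phi> (p + q) i = resp \<phi> p i + resp \<phi> q i"
  unfolding resp_def by (simp add: sum.distrib)

lemma resp_scale: "resp \<phi> (c *\<^sub>R p) i = c * resp \<phi> p i"
  unfolding resp_def by (simp add: sum_distrib_left)

lemma linear_rv: "linear (rv \<phi>)"
  by (rule linearI) (simp_all add: rv_def resp_add resp_scale vec_eq_iff)

lemma inner_rv: "a \<bullet> rv \<phi> p = (\<Sum>i\<in>UNIV. a $ i * resp \<phi> p i)"
  by (simp add: rv_def inner_vec_def)

lemma inner_const: "(a::real^'n) \<bullet> (\<chi> j. c) = c * (\<Sum>i\<in>UNIV. a $ i)"
  by (simp add: inner_vec_def sum_distrib_left mult.commute)

lemma resp_inner: "resp \<phi> p i = (\<chi> x. if \<phi> x = x i then 1 else 0) \<bullet> p"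
proof -
  have "resp \<phi> p i = (\<Sum>x\<in>UNIV. if \<phi> x = x i then p $ x else 0)"
    unfolding resp_def using sum.inter_filter[of UNIV "\<lambda>x. p $ x" "\<lambda>x. \<phi> x = x i"] by simp
  also have "\<dots> = (\<chi> x. if \<phi> x = x i then 1 else 0) \<bullet> p"
    unfolding inner_vec_def by (intro sum.cong) auto
  finally show ?thesis .
qed

lemma wsum_inner:
  "(\<Sum>i\<in>UNIV. w i * resp \<phi> p i) = (\<Sum>i\<in>UNIV. w i *\<^sub>R (\<chi> x. if \<phi> x = x i then 1 else 0)) \<bullet> p"
  by (simp add: resp_inner inner_sum_left)

lemma simplex_bounded: "bounded (prob_simplex :: (real ^ ('n::finite \<Rightarrow> vote)) set)"
proof -
  have "prob_simplex \<subseteq> cbox (0 :: real ^ ('n \<Rightarrow> vote)) (\<chi> _. 1)"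
  proof
    fix p :: "real ^ ('n \<Rightarrow> vote)" assume "p \<in> prob_simplex"
    then have nn: "\<forall>x. p $ x \<ge> 0" and s: "(\<Sum>x\<in>UNIV. p $ x) = 1"
      by (auto simp: prob_simplex_def)
    have "p $ x \<le> 1" for x
      using member_le_sum[of x UNIV "\<lambda>x. p $ x"] nn s by auto
    then show "p \<in> cbox 0 (\<chi> _. 1)" using nn by (simp add: mem_box_cart)
  qed
  then show ?thesis using bounded_cbox bounded_subset by blast
qed

lemma wpos:
  fixes a :: "'n::finite \<Rightarrow> real"
  assumes "\<forall>i. a i \<ge> 0" "\<exists>i. a i \<noteq> 0"
  shows "(\<Sum>i\<in>UNIV. a i) > 0"
proof -
  have "(\<Sum>i\<in>UNIV. a i) \<ge> 0" using assms by (simp add: sum_nonneg)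
  moreover have "(\<Sum>i\<in>UNIV. a i) \<noteq> 0"
    using assms sum_nonneg_eq_0_iff[of UNIV a] by auto
  ultimately show ?thesis by linarith
qed


lemma compact_P:
  assumes "closed P" "P \<subseteq> (prob_simplex :: (real ^ ('n::finite \<Rightarrow> vote)) set)"
  shows "compact P"
  using assms simplex_bounded bounded_subset compact_eq_bounded_closed by blast

lemma backward:
  fixes P :: "(real ^ ('n::finite \<Rightarrow> vote)) set" and w :: "'n \<Rightarrow> real"
  assumes cp: "compact P" and cv: "convex P"
    and w0: "\<forall>i. w i \<ge> 0" and wn: "\<exists>i. w i \<noteq> 0"
    and strict: "strict \<Longrightarrow> (\<forall>p. p extreme_point_of P \<longrightarrow>
                  (\<Sum>i\<in>UNIV. w i * resp \<phi> p i) / (\<Sum>i\<in>UNIV. w i) > 1/2)"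
    and weak: "\<not> strict \<Longrightarrow> (\<forall>p. p extreme_point_of P \<longrightarrow>
                  (\<Sum>i\<in>UNIV. w i * resp \<phi> p i) / (\<Sum>i\<in>UNIV. w i) \<ge> 1/2)"
    and pP: "p \<in> P"
  shows "(strict \<longrightarrow> (\<exists>i. resp \<phi> p i > 1/2)) \<and> (\<not> strict \<longrightarrow> (\<exists>i. resp \<phi> p i \<ge> 1/2))"
proof -
  define W where "W = (\<Sum>i\<in>UNIV. w i)"
  have W: "W > 0" unfolding W_def using wpos[OF w0 wn] .
  define c where "c = (\<Sum>i\<in>UNIV. w i *\<^sub>R (\<chi> x. if \<phi> x = x i then 1 else (0::real)) :: real ^ ('n \<Rightarrow> vote))"
  have ws: "(\<Sum>i\<in>UNIV. w i * resp \<phi> q i) = c \<bullet> q" for q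
    unfolding c_def by (rule wsum_inner)
  have PP: "P = convex hull {x. x extreme_point_of P}"
    by (rule Krein_Milman_Minkowski[OF cp cv])
  show ?thesis
  proof (cases strict)
    case True
    have "{x. x extreme_point_of P} \<subseteq> {q. c \<bullet> q > W/2}"
      using strict[OF True] W by (auto simp: ws W_def[symmetric] less_divide_eq)
    then have "convex hull {x. x extreme_point_of P} \<subseteq> {q. c \<bullet> q > W/2}"
      by (intro hull_minimal convex_halfspace_gt)
    then have g: "(\<Sum>i\<in>UNIV. w i * resp \<phi> p i) > W/2" using pP PP ws by auto
    have "\<exists>i. resp \<phi> p i > 1/2"
    proof (rule ccontr)
      assume "\<not> ?thesis"
      then have "(\<Sum>i\<in>UNIV. w i * resp \<phi> p i) \<le> (\<Sum>i\<in>UNIV. w i * (1/2))"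
        using w0 by (intro sum_mono mult_left_mono) (auto simp: not_less)
      then show False using g by (simp add: W_def sum_divide_distrib[symmetric])
    qed
    then show ?thesis using True by auto
  next
    case False
    have "{x. x extreme_point_of P} \<subseteq> {q. c \<bullet> q \<ge> W/2}"
      using weak[OF False] W by (auto simp: ws W_def[symmetric] le_divide_eq)
    then have "convex hull {x. x extreme_point_of P} \<subseteq> {q. c \<bullet> q \<ge> W/2}"
      by (intro hull_minimal convex_halfspace_ge)
    then have g: "(\<Sum>i\<in>UNIV. w i * resp \<phi> p i) \<ge> W/2" using pP PP ws by auto
    have "\<exists>i. resp \<phi> p i \<ge> 1/2"
    proof (rule ccontr)
      assume "\<not> ?thesis"
      then have lt: "\<forall>i. resp \<phi> p i < 1/2" by (auto simp: not_le)
      obtain j where j: "w j \<noteq> 0" using wn by auto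
      have "(\<Sum>i\<in>UNIV. w i * resp \<phi> p i) < (\<Sum>i\<in>UNIV. w i * (1/2))"
      proof (rule sum_strict_mono_ex1)
        show "\<forall>x\<in>UNIV. w x * resp \<phi> p x \<le> w x * (1/2)"
          using w0 lt by (metis less_imp_le mult_left_mono)
        show "\<exists>a\<in>UNIV. w a * resp \<phi> p a < w a * (1/2)"
          using w0 lt j by (intro bexI[of _ j] mult_strict_left_mono) (auto simp: order_le_less)
      qed simp
      then show False using g by (simp add: W_def sum_divide_distrib[symmetric])
    qed
    then show ?thesis using False by auto
  qed
qed


lemma forward_strict:
  fixes P :: "(real ^ ('n::finite \<Rightarrow> vote)) set"
  assumes cp: "compact P" and cv: "convex P" and ne: "P \<noteq> {}"
    and rob: "\<forall>p\<in>P. \<exists>i. resp \<phi> p i > 1/2"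
  shows "\<exists>a::real^'n. (\<forall>i. a$i \<ge> 0) \<and> (\<exists>i. a$i \<noteq> 0) \<and>
           (\<forall>p\<in>P. (\<Sum>i\<in>UNIV. a$i * resp \<phi> p i) / (\<Sum>i\<in>UNIV. a$i) > 1/2)"
proof -
  define S where "S = {y::real^'n. \<forall>i. y$i \<le> 1/2}"
  define T where "T = rv \<phi> ` P"
  have Seq: "S = (\<Inter>i. {y::real^'n. y$i \<le> 1/2})" unfolding S_def by auto
  have cS: "closed S" unfolding Seq by (rule closed_INT, rule ballI, rule closed_halfspace_component_le_cart)
  have vS: "convex S"
  proof (rule convexI)
    fix x y :: "real^'n" and u v :: real
    assume "x \<in> S" "y \<in> S" "0 \<le> u" "0 \<le> v" "u + v = 1"
    then show "u *\<^sub>R x + v *\<^sub>R y \<in> S"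
      unfolding S_def
    proof (intro CollectI allI)
      fix i
      show "(u *\<^sub>R x + v *\<^sub>R y) $ i \<le> 1/2"
        using convex_bound_le[of "x$i" "1/2::real" "y$i" u v] \<open>x \<in> S\<close> \<open>y \<in> S\<close> \<open>0 \<le> u\<close> \<open>0 \<le> v\<close> \<open>u + v = 1\<close>
        unfolding S_def by simp
    qed
  qed
  have lin: "linear (rv \<phi>)" by (rule linear_rv)
  have cT: "compact T" unfolding T_def
    by (intro compact_continuous_image linear_continuous_on linear_conv_bounded_linear[THEN iffD1] lin cp)
  have vT: "convex T" unfolding T_def by (intro convex_linear_image lin cv)
  have nT: "T \<noteq> {}" using ne unfolding T_def by auto
  have dj: "S \<inter> T = {}"
    using rob unfolding S_def T_def by (auto simp: rv_def not_le[symmetric])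
  obtain a b where ab: "\<forall>x\<in>S. a \<bullet> x < b" "\<forall>x\<in>T. a \<bullet> x > b"
    using separating_hyperplane_closed_compact[OF vS cS vT cT nT dj] by blast
  define h :: "real^'n" where "h = (\<chi> _. 1/2)"
  have hS: "h \<in> S" unfolding S_def h_def by simp
  have ah: "a \<bullet> h = (1/2) * (\<Sum>i\<in>UNIV. a$i)" unfolding h_def by (rule inner_const)
  have a0: "a$i \<ge> 0" for i
  proof (rule ccontr)
    assume "\<not> ?thesis"
    then have neg: "a$i < 0" by simp
    define s where "s = (b - a \<bullet> h) / (- a$i)"
    have s0: "s \<ge> 0" unfolding s_def using ab(1) hS neg
      by (intro divide_nonneg_pos) (auto simp del: minus_divide_right)
    have "h - s *\<^sub>R axis i 1 \<in> S" using hS s0 unfolding S_def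
      by (auto simp: axis_def) (smt (verit))
    then have "a \<bullet> (h - s *\<^sub>R axis i 1) < b" using ab(1) by blast
    moreover have "a \<bullet> (h - s *\<^sub>R axis i 1) = b"
      using neg by (simp add: inner_diff_right inner_add_right inner_axis s_def del: minus_divide_right)
    ultimately show False by simp
  qed
  obtain p0 where "p0 \<in> P" using ne by auto
  then have "rv \<phi> p0 \<in> T" unfolding T_def by auto
  then have "a \<bullet> h < a \<bullet> rv \<phi> p0" using ab hS by force
  then have "a \<noteq> 0" by auto
  then obtain j where j: "a$j \<noteq> 0" by (auto simp: vec_eq_iff)
  have A: "(\<Sum>i\<in>UNIV. a$i) > 0" using wpos[of "\<lambda>i. a$i"] a0 j by blast
  show ?thesis
  proof (intro exI[of _ a] conjI allI ballI)
    show "a$i \<ge> 0" for i by (rule a0)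
    show "\<exists>i. a$i \<noteq> 0" using j by blast
    fix p assume "p \<in> P"
    then have "rv \<phi> p \<in> T" unfolding T_def by auto
    then have "a \<bullet> h < a \<bullet> rv \<phi> p" using ab hS by force
    then have "(1/2) * (\<Sum>i\<in>UNIV. a$i) < (\<Sum>i\<in>UNIV. a$i * resp \<phi> p i)"
      by (simp add: ah inner_rv)
    then show "(\<Sum>i\<in>UNIV. a$i * resp \<phi> p i) / (\<Sum>i\<in>UNIV. a$i) > 1/2"
      using A by (simp add: less_divide_eq)
  qed
qed


lemma forward_weak:
  fixes P :: "(real ^ ('n::finite \<Rightarrow> vote)) set"
  assumes cp: "compact P" and cv: "convex P" and ne: "P \<noteq> {}"
    and rob: "\<forall>p\<in>P. \<exists>i. resp \<phi> p i \<ge> 1/2"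
  shows "\<exists>a::real^'n. (\<forall>i. a$i \<ge> 0) \<and> (\<exists>i. a$i \<noteq> 0) \<and>
           (\<forall>p\<in>P. (\<Sum>i\<in>UNIV. a$i * resp \<phi> p i) / (\<Sum>i\<in>UNIV. a$i) \<ge> 1/2)"
proof -
  define S where "S = {y::real^'n. \<forall>i. y$i < 1/2}"
  define T where "T = rv \<phi> ` P"
  have vS: "convex S"
  proof (rule convexI)
    fix x y :: "real^'n" and u v :: real
    assume "x \<in> S" "y \<in> S" "0 \<le> u" "0 \<le> v" "u + v = 1"
    then show "u *\<^sub>R x + v *\<^sub>R y \<in> S"
      unfolding S_def
    proof (intro CollectI allI)
      fix i
      show "(u *\<^sub>R x + v *\<^sub>R y) $ i < 1/2"
        using convex_bound_lt[of "x$i" "1/2::real" "y$i" u v] \<open>x \<in> S\<close> \<open>y \<in> S\<close> \<open>0 \<le> u\<close> \<open>0 \<le> v\<close> \<open>u + v = 1\<close>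
        unfolding S_def by simp
    qed
  qed
  have lin: "linear (rv \<phi>)" by (rule linear_rv)
  have vT: "convex T" unfolding T_def by (intro convex_linear_image lin cv)
  have nT: "T \<noteq> {}" using ne unfolding T_def by auto
  have nS: "S \<noteq> {}" proof -
    have "(0::real^'n) \<in> S" unfolding S_def by simp
    then show ?thesis by blast
  qed
  have dj: "S \<inter> T = {}"
    using rob unfolding S_def T_def by (auto simp: rv_def not_le[symmetric])
  obtain a b where ab: "a \<noteq> 0" "\<forall>x\<in>S. a \<bullet> x \<le> b" "\<forall>x\<in>T. a \<bullet> x \<ge> b"
    using separating_hyperplane_sets[OF vS vT nS nT dj] by blast
  have a0: "a$i \<ge> 0" for i
  proof (rule ccontr)
    assume "\<not> ?thesis"
    then have neg: "a$i < 0" by simp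
    define s where "s = (\<bar>b\<bar> + 1) / (- a$i)"
    have s0: "s \<ge> 0" unfolding s_def using neg
      by (intro divide_nonneg_pos) (auto simp del: minus_divide_right)
    have "- (s *\<^sub>R axis i 1) \<in> S" using s0 unfolding S_def
      by (auto simp: axis_def)
    then have "a \<bullet> (- (s *\<^sub>R axis i 1)) \<le> b" using ab(2) by blast
    moreover have "a \<bullet> (- (s *\<^sub>R axis i 1)) = \<bar>b\<bar> + 1"
      using neg by (simp add: inner_axis s_def del: minus_divide_right)
    ultimately show False by simp
  qed
  obtain j where j: "a$j \<noteq> 0" using ab(1) by (auto simp: vec_eq_iff)
  have A: "(\<Sum>i\<in>UNIV. a$i) > 0" using wpos[of "\<lambda>i. a$i"] a0 j by blast
  define AA where "AA = (\<Sum>i\<in>UNIV. a$i)"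
  show ?thesis
  proof (intro exI[of _ a] conjI allI ballI)
    show "a$i \<ge> 0" for i by (rule a0)
    show "\<exists>i. a$i \<noteq> 0" using j by blast
    fix p assume "p \<in> P"
    then have "rv \<phi> p \<in> T" unfolding T_def by auto
    then have bp: "b \<le> a \<bullet> rv \<phi> p" using ab by force
    have "(1/2) * AA \<le> a \<bullet> rv \<phi> p"
    proof (rule ccontr)
      assume nt: "\<not> ?thesis"
      define d where "d = (1/2) * AA - a \<bullet> rv \<phi> p"
      have d: "d > 0" using nt unfolding d_def by simp
      define e where "e = d / (2 * AA)"
      have e: "e > 0" unfolding e_def using d A AA_def by simp
      have "(\<chi> _. 1/2 - e) \<in> S" unfolding S_def using e by simp
      then have "a \<bullet> (\<chi> _. 1/2 - e) \<le> b" using ab(2) by blast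
      moreover have "a \<bullet> (\<chi> _. 1/2 - e) = (1/2) * AA - d/2"
        unfolding inner_const AA_def[symmetric] e_def using A AA_def
        by (simp add: field_simps)
      ultimately show False using bp d d_def by linarith
    qed
    then have "(1/2) * (\<Sum>i\<in>UNIV. a$i) \<le> (\<Sum>i\<in>UNIV. a$i * resp \<phi> p i)"
      by (simp add: AA_def inner_rv)
    then show "(\<Sum>i\<in>UNIV. a$i * resp \<phi> p i) / (\<Sum>i\<in>UNIV. a$i) \<ge> 1/2"
      using A by (simp add: le_divide_eq)
  qed
qed


lemma ext_in: "p extreme_point_of P \<Longrightarrow> p \<in> P"
  by (simp add: extreme_point_of_def)

theorem corollary4:
  fixes P :: "(real ^ ('n::finite \<Rightarrow> vote)) set"
  assumes "closed P" and "convex P" and "P \<subseteq> prob_simplex"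
  shows "(\<forall>\<phi>. robust \<phi> P \<longleftrightarrow>
            (\<exists>w :: 'n \<Rightarrow> real. (\<forall>i. w i \<ge> 0) \<and> (\<exists>i. w i \<noteq> 0) \<and>
               (\<forall>p. p extreme_point_of P \<longrightarrow>
                  (\<Sum>i\<in>UNIV. w i * resp \<phi> p i) / (\<Sum>i\<in>UNIV. w i) > 1/2)))
       \<and> (\<forall>\<phi>. weakly_robust \<phi> P \<longleftrightarrow>
            (\<exists>w :: 'n \<Rightarrow> real. (\<forall>i. w i \<ge> 0) \<and> (\<exists>i. w i \<noteq> 0) \<and>
               (\<forall>p. p extreme_point_of P \<longrightarrow>
                  (\<Sum>i\<in>UNIV. w i * resp \<phi> p i) / (\<Sum>i\<in>UNIV. w i) \<ge> 1/2)))"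
proof -
  have cp: "compact P" using compact_P assms by blast
  note cv = assms(2)
  show ?thesis
  proof (intro conjI allI iffI)
    fix \<phi> :: "('n \<Rightarrow> vote) \<Rightarrow> vote"
    assume r: "robust \<phi> P"
    show "\<exists>w :: 'n \<Rightarrow> real. (\<forall>i. w i \<ge> 0) \<and> (\<exists>i. w i \<noteq> 0) \<and>
               (\<forall>p. p extreme_point_of P \<longrightarrow>
                  (\<Sum>i\<in>UNIV. w i * resp \<phi> p i) / (\<Sum>i\<in>UNIV. w i) > 1/2)"
    proof (cases "P = {}")
      case True
      then show ?thesis by (intro exI[of _ "\<lambda>_. 1"]) (auto dest: ext_in)
    next
      case False
      obtain a :: "real^'n" where a: "(\<forall>i. a$i \<ge> 0)" "(\<exists>i. a$i \<noteq> 0)"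
           "(\<forall>p\<in>P. (\<Sum>i\<in>UNIV. a$i * resp \<phi> p i) / (\<Sum>i\<in>UNIV. a$i) > 1/2)"
        using forward_strict[OF cp cv False] r unfolding robust_def by blast
      show ?thesis using a by (intro exI[of _ "\<lambda>i. a$i"]) (auto dest: ext_in)
    qed
  next
    fix \<phi> :: "('n \<Rightarrow> vote) \<Rightarrow> vote"
    assume "\<exists>w :: 'n \<Rightarrow> real. (\<forall>i. w i \<ge> 0) \<and> (\<exists>i. w i \<noteq> 0) \<and>
               (\<forall>p. p extreme_point_of P \<longrightarrow>
                  (\<Sum>i\<in>UNIV. w i * resp \<phi> p i) / (\<Sum>i\<in>UNIV. w i) > 1/2)"
    then obtain w :: "'n \<Rightarrow> real" where w: "\<forall>i. w i \<ge> 0" "\<exists>i. w i \<noteq> 0"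
      "\<forall>p. p extreme_point_of P \<longrightarrow> (\<Sum>i\<in>UNIV. w i * resp \<phi> p i) / (\<Sum>i\<in>UNIV. w i) > 1/2"
      by blast
    show "robust \<phi> P" unfolding robust_def
      using backward[OF cp cv w(1) w(2), of True \<phi>] w(3) by auto
  next
    fix \<phi> :: "('n \<Rightarrow> vote) \<Rightarrow> vote"
    assume r: "weakly_robust \<phi> P"
    show "\<exists>w :: 'n \<Rightarrow> real. (\<forall>i. w i \<ge> 0) \<and> (\<exists>i. w i \<noteq> 0) \<and>
               (\<forall>p. p extreme_point_of P \<longrightarrow>
                  (\<Sum>i\<in>UNIV. w i * resp \<phi> p i) / (\<Sum>i\<in>UNIV. w i) \<ge> 1/2)"
    proof (cases "P = {}")
      case True
      then show ?thesis by (intro exI[of _ "\<lambda>_. 1"]) (auto dest: ext_in)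
    next
      case False
      obtain a :: "real^'n" where a: "(\<forall>i. a$i \<ge> 0)" "(\<exists>i. a$i \<noteq> 0)"
           "(\<forall>p\<in>P. (\<Sum>i\<in>UNIV. a$i * resp \<phi> p i) / (\<Sum>i\<in>UNIV. a$i) \<ge> 1/2)"
        using forward_weak[OF cp cv False] r unfolding weakly_robust_def by blast
      show ?thesis using a by (intro exI[of _ "\<lambda>i. a$i"]) (auto dest: ext_in)
    qed
  next
    fix \<phi> :: "('n \<Rightarrow> vote) \<Rightarrow> vote"
    assume "\<exists>w :: 'n \<Rightarrow> real. (\<forall>i. w i \<ge> 0) \<and> (\<exists>i. w i \<noteq> 0) \<and>
               (\<forall>p. p extreme_point_of P \<longrightarrow>
                  (\<Sum>i\<in>UNIV. w i * resp \<phi> p i) / (\<Sum>i\<in>UNIV. w i) \<ge> 1/2)"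
    then obtain w :: "'n \<Rightarrow> real" where w: "\<forall>i. w i \<ge> 0" "\<exists>i. w i \<noteq> 0"
      "\<forall>p. p extreme_point_of P \<longrightarrow> (\<Sum>i\<in>UNIV. w i * resp \<phi> p i) / (\<Sum>i\<in>UNIV. w i) \<ge> 1/2"
      by blast
    show "weakly_robust \<phi> P" unfolding weakly_robust_def
      using backward[OF cp cv w(1) w(2), of False \<phi>] w(3) by auto
  qed
qed

end
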